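(* Let $\Lambda\subseteq\Sigma_A$ and $\Gamma\subseteq\Sigma_B$ be shift spaces. Suppose that $\Phi:\Lambda\to\Gamma$ is a map such that $\Phi(\mathcal O)=\mathcal O$ and such that $C_{\varepsilon}:=\Phi^{-1}(\mathcal O)$ is a finitely defined set in $\Lambda$. Then $\Phi$ is continuous and commutes with the shift map (i.e. $\Phi\circ\sigma=\sigma\circ\Phi$) if, and only if, $\Phi$ is a sliding block code given by $\bigl(\Phi(x)\bigr)_n=\sum_{a\in L_\Gamma\cup\{\varepsilon\}}a\mathbf{1}_{C_a}\circ\sigma^{n-1}(x)$ such that, for all $a\in L_\Gamma$, the set $C_a$ is a finite (possibly empty) union of generalized cylinders of $\Lambda$.
   Context: Alphabets and sequences: $A$ (and similarly $B$) is a countable discrete alphabet, finite or infinite. Let $\varepsilon$ be a new symbol (the empty letter), $\tilde A=A\cup\{\varepsilon\}$. Put $\Sigma_A^{\mathrm{inf}}=A^{\mathbb N}$ and let $\Sigma_A^{\mathrm{fin}}$ be the set of sequences $(x_i)_{i\in\mathbb N}$ in $\tilde A$ containing at least one $\varepsilon$ such that $x_i=\varepsilon$ implies $x_{i+1}=\varepsilon$. The Ott–Tomforde–Willis full shift is $\Sigma_A=\Sigma_A^{\mathrm{inf}}$ if $A$ is finite and $\Sigma_A=\Sigma_A^{\mathrm{inf}}\cup\Sigma_A^{\mathrm{fin}}$ if $A$ is infinite. The length of $x$ is $l(x)=\min\{k-1: x_k=\varepsilon\}$ ($=\infty$ for $x\in A^{\mathbb N}$); a finite sequence of length $k$ is identified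 with the word $x_1\dots x_k$; the constant sequence $\mathcal O=(\varepsilon\varepsilon\varepsilon\dots)$ is the empty sequence (length $0$). For $x\in\Sigma_A^{\mathrm{fin}}$ and finite $F\subset A$, the generalized cylinder is $Z(x,F)=\{y\in\Sigma_A: y_i=x_i \text{ for } 1\le i\le l(x),\ y_{l(x)+1}\notin F\}$, and $Z(x):=Z(x,\emptyset)$. $\Sigma_A$ carries the topology generated by the generalized cylinders (it is compact, metrizable). The shift map is $\sigma((x_i)_{i})=(x_{i+1})_i$ (so $\sigma(\mathcal O)=\mathcal O$). For $\Lambda\subseteq\Sigma_A$: $\Lambda^{\mathrm{fin}}=\Lambda\cap\Sigma_A^{\mathrm{fin}}$, $\Lambda^{\mathrm{inf}}=\Lambda\cap\Sigma_A^{\mathrm{inf}}$; $B_n(\Lambda)\subseteq\tilde A^n$ is the set of words of length $n$ occurring as consecutive subblocks of elements of $\Lambda$, $B(\Lambda)=\bigcup_{n\ge1}B_n(\Lambda)$, and $L_\Lambda=B_1(\Lambda)\setminus\{\varepsilon\}$. For a word $a\in B_n(\Lambda)$, its follower set is $\mathcal F(\Lambda,a)=\{b\in B_1(\Lambda): ab\in B_{n+1}(\Lambda)\}$. A shift space is $\Lambda\subseteq\Sigma_A$ that is closed, satisfies $\sigma(\Lambda)\subseteq\Lambda$, and has the infinite extension property: $\mathcal O\in\Lambda$ iff $L_\Lambda$ is infinite, and a finite sequence $x\neq\mathcal O$ lies in $\Lambda$ iff $|\mathcal F(\Lambda,x)|=\infty$. Generalized cylinders of $\Lambda$ are the sets $Z(x,F)\cap\Lambda$.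 Finitely defined sets: $C\subseteq\Lambda$ is finitely defined in $\Lambda$ if there exist $I,J\subseteq\mathbb N$, integers $\ell_i,n_j\ge0$ and words $b_i,d_j\in B(\Sigma_A)$ ($i\in I$, $j\in J$) with $C=\{x\in\Lambda: (x_1\dots x_{1+\ell_i})=b_i\text{ for some } i\in I\}$ and $\Lambda\setminus C=\{x\in\Lambda: (x_1\dots x_{1+n_j})=d_j \text{ for some } j\in J\}$; its anticipation is $\sup_i\ell_i$. Sliding block codes: given a partition $\{C_a\}_{a\in B\cup\{\varepsilon\}}$ of a shift space $\Lambda\subseteq\Sigma_A$ such that each $C_a$ is finitely defined in $\Lambda$ and $\sigma(C_\varepsilon)\subseteq C_\varepsilon$, the map $\Phi:\Lambda\to\Sigma_B$ with $(\Phi(x))_n=\sum_{a}a\mathbf 1_{C_a}(\sigma^{n-1}(x))$ (i.e. $(\Phi(x))_n$ is the unique $a$ with $\sigma^{n-1}(x)\in C_a$) is called a sliding block code. Here $\mathcal O$ in $\Phi(\mathcal O)=\mathcal O$ and $\Phi^{-1}(\mathcal O)$ denotes the respective empty sequences of $\Sigma_A$ and $\Sigma_B$. *)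

theory Defs
  imports "HOL-Analysis.Analysis"
begin

text \<open>Sequences x = (x_1 x_2 ...) over the extended alphabet A \<union> {\<epsilon>} are modelled as
  functions nat \<Rightarrow> 'a option, with None playing the role of the empty letter \<epsilon> and
  index i (0-based) corresponding to x_{i+1}.\<close>

type_synonym 'a seq = "nat \<Rightarrow> 'a option"

definition Sinf :: "'a set \<Rightarrow> 'a seq set" where
  "Sinf A = {x. \<forall>i. \<exists>a\<in>A. x i = Some a}"

definition Sfin :: "'a set \<Rightarrow> 'a seq set" where
  "Sfin A = {x. (\<forall>i. x i = None \<or> (\<exists>a\<in>A. x i = Some a)) \<and> (\<exists>i. x i = None)
                \<and> (\<forall>i. x i = None \<longrightarrow> x (Suc i) = None)}"

definition OTW :: "'a set \<Rightarrow> 'a seq set" where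
  "OTW A = (if finite A then Sinf A else Sinf A \<union> Sfin A)"

definition emp :: "'a seq" where
  "emp = (\<lambda>_. None)"

text \<open>Length l(x) (meaningful for finite sequences) and the associated word.\<close>
definition len :: "'a seq \<Rightarrow> nat" where
  "len x = (LEAST k. x k = None)"

definition word :: "'a seq \<Rightarrow> 'a option list" where
  "word x = map x [0..<len x]"

definition shift :: "'a seq \<Rightarrow> 'a seq" where
  "shift x = (\<lambda>i. x (Suc i))"

definition gcyl :: "'a set \<Rightarrow> 'a seq \<Rightarrow> 'a set \<Rightarrow> 'a seq set" where
  "gcyl A x F = {y \<in> OTW A. (\<forall>i<len x. y i = x i) \<and> y (len x) \<notin> Some ` F}"

definition gcyls :: "'a set \<Rightarrow> 'a seq set set" where
  "gcyls A = {gcyl A x F | x F. x \<in> Sfin A \<and> finite F \<and> F \<subseteq> A}"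

definition OTW_top :: "'a set \<Rightarrow> 'a seq topology" where
  "OTW_top A = subtopology (topology_generated_by (gcyls A)) (OTW A)"

definition blocks :: "'a seq set \<Rightarrow> nat \<Rightarrow> 'a option list set" where
  "blocks \<Lambda> n = {w. length w = n \<and> (\<exists>x\<in>\<Lambda>. \<exists>k. w = map x [k..<k+n])}"

definition allblocks :: "'a seq set \<Rightarrow> 'a option list set" where
  "allblocks \<Lambda> = (\<Union>n\<in>{1..}. blocks \<Lambda> n)"

definition letters :: "'a seq set \<Rightarrow> 'a set" where
  "letters \<Lambda> = {a. [Some a] \<in> blocks \<Lambda> 1}"

definition follower :: "'a seq set \<Rightarrow> 'a option list \<Rightarrow> 'a option set" where
  "follower \<Lambda> w = {b. [b] \<in> blocks \<Lambda> 1 \<and> w @ [b] \<in> blocks \<Lambda> (Suc (length w))}"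

definition shift_space :: "'a set \<Rightarrow> 'a seq set \<Rightarrow> bool" where
  "shift_space A \<Lambda> \<longleftrightarrow>
     \<Lambda> \<subseteq> OTW A \<and> closedin (OTW_top A) \<Lambda> \<and> shift ` \<Lambda> \<subseteq> \<Lambda> \<and>
     (emp \<in> \<Lambda> \<longleftrightarrow> infinite (letters \<Lambda>)) \<and>
     (\<forall>x\<in>Sfin A. x \<noteq> emp \<longrightarrow> (x \<in> \<Lambda> \<longleftrightarrow> infinite (follower \<Lambda> (word x))))"

text \<open>Finitely defined sets (the word x_1 ... x_{1+l} is map x [0..<Suc l]).\<close>
definition finitely_defined :: "'a set \<Rightarrow> 'a seq set \<Rightarrow> 'a seq set \<Rightarrow> bool" where
  "finitely_defined A \<Lambda> C \<longleftrightarrow> C \<subseteq> \<Lambda> \<and>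
     (\<exists>(I::nat set) (J::nat set) (l::nat \<Rightarrow> nat) (n::nat \<Rightarrow> nat)
        (b::nat \<Rightarrow> 'a option list) (d::nat \<Rightarrow> 'a option list).
        (\<forall>i\<in>I. b i \<in> allblocks (OTW A)) \<and> (\<forall>j\<in>J. d j \<in> allblocks (OTW A)) \<and>
        C = {x\<in>\<Lambda>. \<exists>i\<in>I. map x [0..<Suc (l i)] = b i} \<and>
        \<Lambda> - C = {x\<in>\<Lambda>. \<exists>j\<in>J. map x [0..<Suc (n j)] = d j})"

definition sliding_block_code ::
  "'a set \<Rightarrow> 'a seq set \<Rightarrow> 'b set \<Rightarrow> ('b option \<Rightarrow> 'a seq set) \<Rightarrow> ('a seq \<Rightarrow> 'b seq) \<Rightarrow> bool" where
  "sliding_block_code A \<Lambda> K C \<Phi> \<longleftrightarrow>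
     (\<forall>a\<in>insert None (Some ` K). finitely_defined A \<Lambda> (C a)) \<and>
     (\<forall>a\<in>insert None (Some ` K). \<forall>b\<in>insert None (Some ` K). a \<noteq> b \<longrightarrow> C a \<inter> C b = {}) \<and>
     (\<Union>a\<in>insert None (Some ` K). C a) = \<Lambda> \<and>
     shift ` C None \<subseteq> C None \<and>
     (\<forall>x\<in>\<Lambda>. \<forall>n. \<Phi> x n = (THE a. a \<in> insert None (Some ` K) \<and> (shift ^^ n) x \<in> C a))"

end

theory Submission
  imports Defs
begin

definition cyl :: "'a set \<Rightarrow> 'a list \<Rightarrow> 'a set \<Rightarrow> 'a seq set" where
  "cyl A w F = {y \<in> OTW A. (\<forall>i<length w. y i = Some (w!i)) \<and> y (length w) \<notin> Some ` F}"

definition sq :: "'a list \<Rightarrow> 'a seq" where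
  "sq w = (\<lambda>i. if i < length w then Some (w!i) else None)"

lemma OTW_vals: "x \<in> OTW A \<Longrightarrow> x i = None \<or> (\<exists>a\<in>A. x i = Some a)"
  by (auto simp: OTW_def Sinf_def Sfin_def split: if_splits)

lemma Sfin_none_mono: assumes "x \<in> Sfin A" "x i = None" "i \<le> j" shows "x j = None"
  using assms(3,2)
proof (induction j rule: dec_induct)
  case (step n) then show ?case using assms(1) by (auto simp: Sfin_def)
qed auto

lemma OTW_none_mono: assumes "x \<in> OTW A" "x i = None" "i \<le> j" shows "x j = None"
proof -
  have "x \<notin> Sinf A" using assms(2) by (auto simp: Sinf_def intro!: exI[of _ i])
  then have "x \<in> Sfin A" using assms(1) by (auto simp: OTW_def split: if_splits)
  then show ?thesis using Sfin_none_mono assms by blast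
qed

lemma OTW_fin: "finite A \<Longrightarrow> x \<in> OTW A \<Longrightarrow> x i \<noteq> None"
  by (auto simp: OTW_def Sinf_def)

lemma shift_pow: "(shift ^^ n) x = (\<lambda>i. x (i + n))"
  by (induction n) (auto simp: shift_def)

lemma shift_OTW: assumes "x \<in> OTW A" shows "shift x \<in> OTW A"
proof (cases "x \<in> Sinf A")
  case True then show ?thesis using assms by (auto simp: OTW_def Sinf_def shift_def split: if_splits)
next
  case False
  then have F: "x \<in> Sfin A" "infinite A" using assms by (auto simp: OTW_def split: if_splits)
  then obtain i where "x i = None" by (auto simp: Sfin_def)
  then have "x (Suc i) = None" using F by (auto simp: Sfin_def)
  then have "shift x \<in> Sfin A" using F by (auto simp: Sfin_def shift_def)
  then show ?thesis using F by (auto simp: OTW_def)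
qed

lemma shiftpow_OTW: "x \<in> OTW A \<Longrightarrow> (shift ^^ n) x \<in> OTW A"
  by (induction n) (auto simp: shift_OTW)

lemma Sinf_OTW: "Sinf A \<subseteq> OTW A" by (auto simp: OTW_def)
lemma Sfin_OTW: "infinite A \<Longrightarrow> Sfin A \<subseteq> OTW A" by (auto simp: OTW_def)

lemma sq_Sfin: "set w \<subseteq> A \<Longrightarrow> sq w \<in> Sfin A"
  by (auto simp: Sfin_def sq_def intro!: exI[of _ "length w"])

lemma len_sq: "len (sq w) = length w"
  unfolding len_def by (rule Least_equality) (auto simp: sq_def split: if_splits)

lemma Sfin_sq: assumes "x \<in> Sfin A" shows "\<exists>w. set w \<subseteq> A \<and> x = sq w"
proof -
  obtain k where k: "x k = None" using assms by (auto simp: Sfin_def)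
  have L: "x (len x) = None" unfolding len_def by (rule LeastI[of _ k]) (rule k)
  have B: "i < len x \<Longrightarrow> x i \<noteq> None" for i unfolding len_def using not_less_Least by blast
  define w where "w = map (\<lambda>i. the (x i)) [0..<len x]"
  have "set w \<subseteq> A"
  proof
    fix a assume "a \<in> set w"
    then obtain i where i: "i < len x" "a = the (x i)" by (auto simp: w_def)
    have "x i = None \<or> (\<exists>b\<in>A. x i = Some b)" using assms unfolding Sfin_def by blast
    then obtain b where "b \<in> A" "x i = Some b" using B[OF i(1)] by blast
    then show "a \<in> A" using i(2) by simp
  qed
  moreover have "x = sq w"
  proof
    fix i show "x i = sq w i"
    proof (cases "i < len x")
      case True
      have "length w = len x" by (simp add: w_def)
      moreover have "w ! i = the (x i)" using True by (simp add: w_def)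
      ultimately show ?thesis using B[OF True] True by (auto simp: sq_def)
    next
      case False
      have "length w = len x" by (simp add: w_def)
      then show ?thesis using Sfin_none_mono[OF assms L, of i] False by (simp add: sq_def)
    qed
  qed
  ultimately show ?thesis by blast
qed

lemma gcyl_sq: "gcyl A (sq w) F = cyl A w F"
proof -
  have "\<forall>i<length w. sq w i = Some (w!i)" by (simp add: sq_def)
  then show ?thesis unfolding gcyl_def len_sq cyl_def by auto
qed

lemma gcyls_eq: "gcyls A = {cyl A w F | w F. set w \<subseteq> A \<and> finite F \<and> F \<subseteq> A}"
proof -
  have "gcyls A \<subseteq> {cyl A w F | w F. set w \<subseteq> A \<and> finite F \<and> F \<subseteq> A}"
  proof
    fix G assume "G \<in> gcyls A"
    then obtain x F where G: "G = gcyl A x F" "x \<in> Sfin A" "finite F" "F \<subseteq> A" unfolding gcyls_def by blast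
    obtain w where w: "set w \<subseteq> A" "x = sq w" using Sfin_sq[OF G(2)] by blast
    have "G = cyl A w F" using G(1) w(2) gcyl_sq by simp
    then show "G \<in> {cyl A w F | w F. set w \<subseteq> A \<and> finite F \<and> F \<subseteq> A}" using w G by blast
  qed
  moreover have "{cyl A w F | w F. set w \<subseteq> A \<and> finite F \<and> F \<subseteq> A} \<subseteq> gcyls A"
  proof
    fix G assume "G \<in> {cyl A w F | w F. set w \<subseteq> A \<and> finite F \<and> F \<subseteq> A}"
    then obtain w F where G: "G = cyl A w F" "set w \<subseteq> A" "finite F" "F \<subseteq> A" by blast
    have "G = gcyl A (sq w) F" using G(1) by (simp add: gcyl_sq)
    then show "G \<in> gcyls A" unfolding gcyls_def using sq_Sfin[OF G(2)] G by blast
  qed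
  ultimately show ?thesis by blast
qed

lemma cyl_OTW: "cyl A w F \<subseteq> OTW A" by (auto simp: cyl_def)
lemma cyl_Nil: "cyl A [] {} = OTW A" by (auto simp: cyl_def)

lemma Union_gcyls: "\<Union>(gcyls A) = OTW A"
proof
  show "\<Union>(gcyls A) \<subseteq> OTW A" unfolding gcyls_eq using cyl_OTW by blast
  have "cyl A [] {} \<in> gcyls A" unfolding gcyls_eq by force
  then show "OTW A \<subseteq> \<Union>(gcyls A)" using cyl_Nil by (metis Union_upper)
qed

lemma cyl_agree_iff:
  assumes "x \<in> OTW A" "y \<in> OTW A" "\<forall>i\<le>length v. y i = x i"
  shows "y \<in> cyl A v F \<longleftrightarrow> x \<in> cyl A v F"
proof -
  have "(\<forall>i<length v. y i = Some (v!i)) \<longleftrightarrow> (\<forall>i<length v. x i = Some (v!i))"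
    using assms(3) by auto
  moreover have "y (length v) = x (length v)" using assms(3) by auto
  ultimately show ?thesis using assms(1,2) unfolding cyl_def by simp
qed


lemma cyl_sub:
  assumes "x \<in> cyl A v F" "x \<in> cyl A u E" "length v < length u"
  shows "cyl A u E \<subseteq> cyl A v F"
proof
  fix y assume y: "y \<in> cyl A u E"
  have xv: "\<forall>i<length v. x i = Some (v!i)" "x (length v) \<notin> Some ` F" "x \<in> OTW A"
    using assms(1) by (auto simp: cyl_def)
  have xu: "\<forall>i<length u. x i = Some (u!i)" using assms(2) by (auto simp: cyl_def)
  have yu: "\<forall>i<length u. y i = Some (u!i)" "y \<in> OTW A" using y by (auto simp: cyl_def)
  have "\<forall>i\<le>length v. y i = x i" using xu yu assms(3) by auto
  then have "\<forall>i<length v. y i = Some (v!i)" "y (length v) \<notin> Some ` F" using xv by auto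
  then show "y \<in> cyl A v F" using yu(2) by (simp add: cyl_def)
qed

lemma cyl_eq_len:
  assumes "x \<in> cyl A v F" "x \<in> cyl A u E" "length v = length u"
  shows "u = v"
proof (rule nth_equalityI)
  show "length u = length v" using assms(3) by simp
  fix i assume "i < length u"
  then have "x i = Some (u!i)" "x i = Some (v!i)" using assms by (auto simp: cyl_def)
  then show "u ! i = v ! i" by simp
qed

lemma cyl_Un: "cyl A v F \<inter> cyl A v E = cyl A v (F \<union> E)"
  by (auto simp: cyl_def)

definition loc :: "'a set \<Rightarrow> 'a seq \<Rightarrow> ('a seq \<Rightarrow> bool) \<Rightarrow> bool" where
  "loc A x P \<longleftrightarrow> (\<exists>w G. set w \<subseteq> A \<and> finite G \<and> G \<subseteq> A \<and> x \<in> cyl A w G \<and> (\<forall>y\<in>cyl A w G. P y))"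

lemma loc_mono:
  assumes "loc A x P" "\<And>y. y \<in> OTW A \<Longrightarrow> P y \<Longrightarrow> Q y" shows "loc A x Q"
proof -
  obtain w G where a: "set w \<subseteq> A" "finite G" "G \<subseteq> A" "x \<in> cyl A w G" "\<forall>y\<in>cyl A w G. P y"
    using assms(1) unfolding loc_def by blast
  have "\<forall>y\<in>cyl A w G. Q y"
  proof
    fix y assume "y \<in> cyl A w G"
    then show "Q y" using a(5) assms(2) cyl_OTW[of A w G] by blast
  qed
  then show ?thesis unfolding loc_def using a by blast
qed

lemma loc_OTW: "loc A x P \<Longrightarrow> x \<in> OTW A"
  unfolding loc_def using cyl_OTW by blast

lemma loc_true: assumes "x \<in> OTW A" shows "loc A x (\<lambda>y. True)"
proof -
  have "x \<in> cyl A [] {}" using assms cyl_Nil by blast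
  moreover have "set [] \<subseteq> A" "finite {}" "{} \<subseteq> A" by auto
  ultimately show ?thesis unfolding loc_def by blast
qed

lemma loc_conj_aux:
  assumes "set w \<subseteq> A" "finite G" "G \<subseteq> A" "x \<in> cyl A w G" "\<forall>y\<in>cyl A w G. P y"
    "set u \<subseteq> A" "finite E" "E \<subseteq> A" "x \<in> cyl A u E" "\<forall>y\<in>cyl A u E. Q y"
    "length w \<le> length u"
  shows "loc A x (\<lambda>y. P y \<and> Q y)"
proof (cases "length w < length u")
  case True
  then have "cyl A u E \<subseteq> cyl A w G" using cyl_sub[OF assms(4) assms(9)] by blast
  then have "\<forall>y\<in>cyl A u E. P y \<and> Q y" using assms(5,10) by blast
  then show ?thesis unfolding loc_def using assms(6-9) by blast
next
  case False
  then have "length w = length u" using assms(11) by simp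
  then have "u = w" using cyl_eq_len[OF assms(4) assms(9)] by blast
  then have c: "x \<in> cyl A w (G \<union> E)" "\<forall>y\<in>cyl A w (G \<union> E). P y \<and> Q y"
    using assms(4,5,9,10) cyl_Un[of A w G E] by blast+
  have "finite (G \<union> E)" "G \<union> E \<subseteq> A" using assms(2,3,7,8) by auto
  then show ?thesis unfolding loc_def using c assms(1) by blast
qed

lemma loc_conj: "loc A x P \<Longrightarrow> loc A x Q \<Longrightarrow> loc A x (\<lambda>y. P y \<and> Q y)"
proof -
  assume "loc A x P" "loc A x Q"
  then obtain w G u E where a: "set w \<subseteq> A" "finite G" "G \<subseteq> A" "x \<in> cyl A w G" "\<forall>y\<in>cyl A w G. P y"
    "set u \<subseteq> A" "finite E" "E \<subseteq> A" "x \<in> cyl A u E" "\<forall>y\<in>cyl A u E. Q y"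
    unfolding loc_def by blast
  show ?thesis
  proof (cases "length w \<le> length u")
    case True then show ?thesis using loc_conj_aux[OF a True] by blast
  next
    case False
    then have "loc A x (\<lambda>y. Q y \<and> P y)" using loc_conj_aux[OF a(6-10) a(1-5)] by simp
    then show ?thesis by (rule loc_mono) blast
  qed
qed

lemma loc_ball:
  assumes "finite I" "x \<in> OTW A" "\<forall>i\<in>I. loc A x (P i)"
  shows "loc A x (\<lambda>y. \<forall>i\<in>I. P i y)"
  using assms
proof (induction I rule: finite_induct)
  case empty then show ?case using loc_true by simp
next
  case (insert a F)
  have "loc A x (P a)" "loc A x (\<lambda>y. \<forall>i\<in>F. P i y)" using insert by auto
  then have "loc A x (\<lambda>y. P a y \<and> (\<forall>i\<in>F. P i y))" using loc_conj by blast
  then show ?case by (rule loc_mono) auto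
qed

lemma gen_loc: "generate_topology_on (gcyls A) U \<Longrightarrow> x \<in> U \<Longrightarrow> loc A x (\<lambda>y. y \<in> U)"
proof (induction arbitrary: x rule: generate_topology_on.induct)
  case Empty then show ?case by simp
next
  case (Int a b) then show ?case using loc_conj[of A x "\<lambda>y. y \<in> a" "\<lambda>y. y \<in> b"] by simp
next
  case (UN K)
  then obtain k where "k \<in> K" "x \<in> k" by blast
  then have "loc A x (\<lambda>y. y \<in> k)" using UN by blast
  then show ?case by (rule loc_mono) (use \<open>k \<in> K\<close> in blast)
next
  case (Basis s)
  then have "s \<in> {cyl A w F | w F. set w \<subseteq> A \<and> finite F \<and> F \<subseteq> A}" by (simp add: gcyls_eq)
  then obtain w G where "s = cyl A w G" "set w \<subseteq> A" "finite G" "G \<subseteq> A" by blast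
  then show ?case using Basis unfolding loc_def by blast
qed

lemma openX:
  assumes "\<Lambda> \<subseteq> OTW A"
  shows "openin (subtopology (OTW_top A) \<Lambda>) P \<longleftrightarrow> P \<subseteq> \<Lambda> \<and> (\<forall>x\<in>P. loc A x (\<lambda>y. y \<in> \<Lambda> \<longrightarrow> y \<in> P))"
proof -
  have e: "openin (subtopology (OTW_top A) \<Lambda>) P \<longleftrightarrow>
      (\<exists>T. generate_topology_on (gcyls A) T \<and> P = T \<inter> (OTW A \<inter> \<Lambda>))"
    unfolding OTW_top_def subtopology_subtopology openin_subtopology openin_topology_generated_by_iff
    by simp
  show ?thesis
  proof
    assume "openin (subtopology (OTW_top A) \<Lambda>) P"
    then obtain T where T: "generate_topology_on (gcyls A) T" "P = T \<inter> (OTW A \<inter> \<Lambda>)" using e by blast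
    have "loc A x (\<lambda>y. y \<in> \<Lambda> \<longrightarrow> y \<in> P)" if "x \<in> P" for x
    proof -
      have "loc A x (\<lambda>y. y \<in> T)" using gen_loc[OF T(1)] that T(2) by blast
      then show ?thesis by (rule loc_mono) (use T(2) in blast)
    qed
    then show "P \<subseteq> \<Lambda> \<and> (\<forall>x\<in>P. loc A x (\<lambda>y. y \<in> \<Lambda> \<longrightarrow> y \<in> P))" using T(2) by blast
  next
    assume H: "P \<subseteq> \<Lambda> \<and> (\<forall>x\<in>P. loc A x (\<lambda>y. y \<in> \<Lambda> \<longrightarrow> y \<in> P))"
    define K where "K = {cyl A w G | w G. set w \<subseteq> A \<and> finite G \<and> G \<subseteq> A \<and> (\<forall>y\<in>cyl A w G. y \<in> \<Lambda> \<longrightarrow> y \<in> P)}"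
    have "K \<subseteq> gcyls A" unfolding K_def gcyls_eq by blast
    then have g: "generate_topology_on (gcyls A) (\<Union>K)"
      by (metis generate_topology_on.Basis generate_topology_on.UN subsetD)
    have "P \<subseteq> \<Union>K"
    proof
      fix x assume "x \<in> P"
      then obtain w G where "set w \<subseteq> A" "finite G" "G \<subseteq> A" "x \<in> cyl A w G" "\<forall>y\<in>cyl A w G. y \<in> \<Lambda> \<longrightarrow> y \<in> P"
        using H unfolding loc_def by blast
      then show "x \<in> \<Union>K" unfolding K_def by blast
    qed
    moreover have "\<Union>K \<inter> \<Lambda> \<subseteq> P" unfolding K_def by blast
    ultimately have "P = \<Union>K \<inter> (OTW A \<inter> \<Lambda>)" using H assms by blast
    then show "openin (subtopology (OTW_top A) \<Lambda>) P" using e g by blast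
  qed
qed

lemma topspace_OTW: "topspace (OTW_top A) = OTW A"
  unfolding OTW_top_def by (simp add: Union_gcyls)

lemma closed_loc:
  assumes "closedin (OTW_top A) \<Lambda>" "x \<in> OTW A" "x \<notin> \<Lambda>"
  shows "loc A x (\<lambda>y. y \<notin> \<Lambda>)"
proof -
  have "openin (OTW_top A) (OTW A - \<Lambda>)" using assms(1) unfolding closedin_def topspace_OTW by blast
  then obtain T where T: "generate_topology_on (gcyls A) T" "OTW A - \<Lambda> = T \<inter> OTW A"
    unfolding OTW_top_def openin_subtopology openin_topology_generated_by_iff by blast
  have "loc A x (\<lambda>y. y \<in> T)" using gen_loc[OF T(1)] assms(2,3) T(2) by blast
  then show ?thesis by (rule loc_mono) (use T(2) in blast)
qed


lemma cyl_finite_empty: "finite A \<Longrightarrow> cyl A w A = {}"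
  by (auto simp: cyl_def OTW_def Sinf_def)

lemma sq_cyl: "set w \<subseteq> A \<Longrightarrow> infinite A \<Longrightarrow> sq w \<in> cyl A w {}"
  using sq_Sfin Sfin_OTW by (fastforce simp: cyl_def sq_def)

lemma sq_in_cyl:
  assumes "set w \<subseteq> A" "infinite A" "sq w \<in> cyl A v F" "finite F" "F \<subseteq> A"
  shows "\<exists>E. finite E \<and> E \<subseteq> A \<and> cyl A w E \<subseteq> cyl A v F"
proof -
  have z: "sq w \<in> cyl A w {}" using sq_cyl assms by blast
  have "\<not> length w < length v"
  proof
    assume "length w < length v"
    then have "sq w (length w) = Some (v ! length w)" using assms(3) by (simp add: cyl_def)
    then show False by (simp add: sq_def)
  qed
  then consider "length v < length w" | "length v = length w" by linarith
  then show ?thesis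
  proof cases
    case 1
    then have "cyl A w {} \<subseteq> cyl A v F" using cyl_sub[OF assms(3) z] by blast
    then show ?thesis by blast
  next
    case 2
    then have "w = v" using cyl_eq_len[OF assms(3) z] by simp
    then show ?thesis using assms(4,5) by blast
  qed
qed

lemma cyl_split:
  "cyl A w {} \<subseteq> cyl A w E \<union> (\<Union>c\<in>E. cyl A (w @ [c]) {})"
proof
  fix y assume y: "y \<in> cyl A w {}"
  show "y \<in> cyl A w E \<union> (\<Union>c\<in>E. cyl A (w @ [c]) {})"
  proof (cases "y (length w) \<in> Some ` E")
    case True
    then obtain c where c: "c \<in> E" "y (length w) = Some c" by blast
    have "\<forall>i<length (w @ [c]). y i = Some ((w @ [c]) ! i)"
    proof (intro allI impI)
      fix i assume "i < length (w @ [c])"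
      then consider "i < length w" | "i = length w" by fastforce
      then show "y i = Some ((w @ [c]) ! i)"
        by cases (use y c in \<open>auto simp: cyl_def nth_append\<close>)
    qed
    then have "y \<in> cyl A (w @ [c]) {}" using y by (simp add: cyl_def)
    then show ?thesis using c by blast
  next
    case False
    then show ?thesis using y by (simp add: cyl_def)
  qed
qed

lemma compact_cover:
  assumes L: "\<Lambda> \<subseteq> OTW A" "closedin (OTW_top A) \<Lambda>" and U: "\<U> \<subseteq> gcyls A" "\<Lambda> \<subseteq> \<Union>\<U>"
  shows "\<exists>S\<subseteq>\<U>. finite S \<and> \<Lambda> \<subseteq> \<Union>S"
proof (rule ccontr)
  assume nc: "\<not> (\<exists>S\<subseteq>\<U>. finite S \<and> \<Lambda> \<subseteq> \<Union>S)"
  define fc where "fc w E \<longleftrightarrow> (\<exists>S\<subseteq>\<U>. finite S \<and> \<Lambda> \<inter> cyl A w E \<subseteq> \<Union>S)" for w E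
  have nil: "\<not> fc [] {}" using nc L(1) cyl_Nil[of A] unfolding fc_def by (metis inf.absorb1)
  have cover_cyl: "\<exists>v F. set v \<subseteq> A \<and> finite F \<and> F \<subseteq> A \<and> x \<in> cyl A v F \<and> fc v F"
    if x: "x \<in> OTW A" for x
  proof (cases "x \<in> \<Lambda>")
    case True
    then obtain G where G: "G \<in> \<U>" "x \<in> G" using U(2) by blast
    then have "G \<in> {cyl A w F | w F. set w \<subseteq> A \<and> finite F \<and> F \<subseteq> A}" using U(1) gcyls_eq by blast
    then obtain v F where vF: "G = cyl A v F" "set v \<subseteq> A" "finite F" "F \<subseteq> A" by blast
    have "fc v F" unfolding fc_def using G vF(1) by (intro exI[of _ "{G}"]) auto
    then show ?thesis using vF G by blast
  next
    case False
    then have "loc A x (\<lambda>y. y \<notin> \<Lambda>)" using closed_loc L(2) x by blast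
    then obtain v F where vF: "set v \<subseteq> A" "finite F" "F \<subseteq> A" "x \<in> cyl A v F" "\<forall>y\<in>cyl A v F. y \<notin> \<Lambda>"
      unfolding loc_def by blast
    have "fc v F" unfolding fc_def using vF(5) by (intro exI[of _ "{}"]) auto
    then show ?thesis using vF by blast
  qed
  have fc_mono: "fc v F \<Longrightarrow> cyl A w E \<subseteq> cyl A v F \<Longrightarrow> fc w E" for v F w E
    unfolding fc_def by blast
  have key: "\<exists>E. finite E \<and> E \<subseteq> A \<and> fc w E" if w: "set w \<subseteq> A" for w
  proof (cases "finite A")
    case True
    have "fc w A" unfolding fc_def using cyl_finite_empty[OF True] by (intro exI[of _ "{}"]) auto
    then show ?thesis using True by blast
  next
    case False
    have "sq w \<in> OTW A" using sq_Sfin[OF w] Sfin_OTW[OF False] by blast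
    then obtain v F where vF: "set v \<subseteq> A" "finite F" "F \<subseteq> A" "sq w \<in> cyl A v F" "fc v F"
      using cover_cyl by blast
    then obtain E where E: "finite E" "E \<subseteq> A" "cyl A w E \<subseteq> cyl A v F"
      using sq_in_cyl[OF w False vF(4) vF(2,3)] by blast
    have "fc w E" using fc_mono[OF vF(5) E(3)] .
    then show ?thesis using E(1,2) by blast
  qed
  have step: "\<exists>c\<in>A. \<not> fc (w @ [c]) {}" if w: "set w \<subseteq> A" "\<not> fc w {}" for w
  proof (rule ccontr)
    assume "\<not> (\<exists>c\<in>A. \<not> fc (w @ [c]) {})"
    then have allc: "\<forall>c\<in>A. \<exists>S. S \<subseteq> \<U> \<and> finite S \<and> \<Lambda> \<inter> cyl A (w @ [c]) {} \<subseteq> \<Union>S"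
      unfolding fc_def by blast
    obtain E where E: "finite E" "E \<subseteq> A" "fc w E" using key w(1) by blast
    obtain S0 where S0: "S0 \<subseteq> \<U>" "finite S0" "\<Lambda> \<inter> cyl A w E \<subseteq> \<Union>S0" using E(3) unfolding fc_def by blast
    obtain Sc where Sc: "\<forall>c\<in>A. Sc c \<subseteq> \<U> \<and> finite (Sc c) \<and> \<Lambda> \<inter> cyl A (w @ [c]) {} \<subseteq> \<Union>(Sc c)"
      using bchoice[OF allc] by blast
    define S where "S = S0 \<union> \<Union>(Sc ` E)"
    have "S \<subseteq> \<U>" using S0(1) Sc E(2) unfolding S_def by blast
    moreover have "finite S" using S0(2) Sc E unfolding S_def by blast
    moreover have "\<Lambda> \<inter> cyl A w {} \<subseteq> \<Union>S"
    proof
      fix y assume y: "y \<in> \<Lambda> \<inter> cyl A w {}"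
      then have "y \<in> cyl A w E \<or> (\<exists>c\<in>E. y \<in> cyl A (w @ [c]) {})" using cyl_split[of A w E] by blast
      then show "y \<in> \<Union>S"
      proof
        assume "y \<in> cyl A w E" then show ?thesis using y S0(3) unfolding S_def by blast
      next
        assume "\<exists>c\<in>E. y \<in> cyl A (w @ [c]) {}"
        then obtain c where "c \<in> E" "y \<in> cyl A (w @ [c]) {}" by blast
        then have "y \<in> \<Union>(Sc c)" using Sc E(2) y by blast
        then show ?thesis using \<open>c \<in> E\<close> unfolding S_def by blast
      qed
    qed
    ultimately have "fc w {}" unfolding fc_def by blast
    then show False using w(2) by blast
  qed
  define nxt where "nxt w = (SOME c. c \<in> A \<and> \<not> fc (w @ [c]) {})" for w
  define f where "f n = ((\<lambda>w. w @ [nxt w]) ^^ n) []" for n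
  have f0: "f 0 = []" and fS: "f (Suc n) = f n @ [nxt (f n)]" for n unfolding f_def by simp_all
  have inv: "set (f n) \<subseteq> A \<and> \<not> fc (f n) {} \<and> length (f n) = n" for n
  proof (induction n)
    case 0 then show ?case using nil f0 by simp
  next
    case (Suc n)
    then have "\<exists>c. c \<in> A \<and> \<not> fc (f n @ [c]) {}" using step by blast
    then have "nxt (f n) \<in> A \<and> \<not> fc (f n @ [nxt (f n)]) {}" unfolding nxt_def by (rule someI_ex)
    then show ?case using Suc fS by simp
  qed
  have pref: "n \<le> m \<Longrightarrow> take n (f m) = f n" for n m
  proof (induction m)
    case 0 then show ?case using f0 by simp
  next
    case (Suc m)
    show ?case
    proof (cases "n = Suc m")
      case True then show ?thesis using inv[of "Suc m"] by simp
    next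
      case False
      then have "n \<le> m" using Suc by simp
      then show ?thesis using Suc fS inv[of m] by simp
    qed
  qed
  define x where "x i = Some (f (Suc i) ! i)" for i
  have xin: "x i = Some (f n ! i)" if "i < n" for i n
  proof -
    have "f (Suc i) = take (Suc i) (f n)" using pref[of "Suc i" n] that by simp
    then show ?thesis unfolding x_def by simp
  qed
  have "x \<in> Sinf A"
  proof -
    have "f (Suc i) ! i \<in> A" for i using inv[of "Suc i"] nth_mem[of i "f (Suc i)"] by auto
    then show ?thesis unfolding Sinf_def x_def by blast
  qed
  then have xO: "x \<in> OTW A" using Sinf_OTW by blast
  have xc: "x \<in> cyl A (f n) {}" for n using xO xin inv[of n] by (simp add: cyl_def)
  obtain v F where vF: "set v \<subseteq> A" "finite F" "F \<subseteq> A" "x \<in> cyl A v F" "fc v F"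
    using cover_cyl xO by blast
  have "cyl A (f (Suc (length v))) {} \<subseteq> cyl A v F"
    using cyl_sub[OF vF(4) xc[of "Suc (length v)"]] inv[of "Suc (length v)"] by simp
  then have "fc (f (Suc (length v))) {}" using fc_mono[OF vF(5)] by blast
  then show False using inv by blast
qed


definition pd :: "'a seq set \<Rightarrow> 'a seq set \<Rightarrow> bool" where
  "pd \<Lambda> D \<longleftrightarrow> (\<forall>x\<in>D. \<exists>n. \<forall>y\<in>\<Lambda>. map y [0..<Suc n] = map x [0..<Suc n] \<longrightarrow> y \<in> D)"

lemma map_in_allblocks: "x \<in> OTW A \<Longrightarrow> map x [0..<Suc n] \<in> allblocks (OTW A)"
proof -
  assume x: "x \<in> OTW A"
  have "map x [0..<Suc n] \<in> blocks (OTW A) (Suc n)"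
    unfolding blocks_def using x by (intro CollectI conjI bexI[of _ x] exI[of _ 0]) auto
  then show ?thesis unfolding allblocks_def by force
qed

lemma prefix_rep:
  assumes A: "countable A" and D: "D \<subseteq> \<Lambda>" "\<Lambda> \<subseteq> OTW A" "pd \<Lambda> D"
  shows "\<exists>(I::nat set) (l::nat\<Rightarrow>nat) (b::nat \<Rightarrow> 'a option list).
           (\<forall>i\<in>I. b i \<in> allblocks (OTW A)) \<and> D = {x\<in>\<Lambda>. \<exists>i\<in>I. map x [0..<Suc (l i)] = b i}"
proof -
  define P where "P = {map x [0..<Suc n] | x n. x \<in> D \<and> (\<forall>y\<in>\<Lambda>. map y [0..<Suc n] = map x [0..<Suc n] \<longrightarrow> y \<in> D)}"
  have "P \<subseteq> lists (insert None (Some ` A))"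
  proof
    fix w assume "w \<in> P"
    then obtain x n where xn: "w = map x [0..<Suc n]" "x \<in> D" unfolding P_def by blast
    then have "x \<in> OTW A" using D by blast
    then have xi: "\<forall>i. x i \<in> insert None (Some ` A)" using OTW_vals[of x A] by blast
    have "set w \<subseteq> insert None (Some ` A)" unfolding xn(1) using xi by (simp only: set_map image_subset_iff) blast
    then show "w \<in> lists (insert None (Some ` A))" by blast
  qed
  moreover have "countable (lists (insert None (Some ` A)))" using A by simp
  ultimately have cP: "countable P" using countable_subset by blast
  have Pgood: "w \<in> allblocks (OTW A) \<and> (\<forall>y\<in>\<Lambda>. map y [0..<Suc (length w - 1)] = w \<longrightarrow> y \<in> D)"
    if "w \<in> P" for w
  proof -
    obtain x n where xn: "w = map x [0..<Suc n]" "x \<in> D"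
      "\<forall>y\<in>\<Lambda>. map y [0..<Suc n] = map x [0..<Suc n] \<longrightarrow> y \<in> D"
      using \<open>w \<in> P\<close> unfolding P_def by blast
    have ln: "length w - 1 = n" using xn(1) by simp
    have "x \<in> OTW A" using xn(2) D by blast
    then have "w \<in> allblocks (OTW A)" using xn(1) map_in_allblocks[of x A n] by simp
    moreover have "\<forall>y\<in>\<Lambda>. map y [0..<Suc (length w - 1)] = w \<longrightarrow> y \<in> D"
    proof (intro ballI impI)
      fix y assume y: "y \<in> \<Lambda>" "map y [0..<Suc (length w - 1)] = w"
      have "map y [0..<Suc n] = w" using y(2) unfolding ln .
      then have "map y [0..<Suc n] = map x [0..<Suc n]" using xn(1) by (rule trans)
      then show "y \<in> D" using xn(3) y(1) by blast
    qed
    ultimately show ?thesis by blast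
  qed
  have Pcov: "\<exists>w\<in>P. map x [0..<Suc (length w - 1)] = w" if xD: "x \<in> D" for x
  proof -
    obtain n where n: "\<forall>y\<in>\<Lambda>. map y [0..<Suc n] = map x [0..<Suc n] \<longrightarrow> y \<in> D"
      using bspec[OF D(3)[unfolded pd_def] xD] by (elim exE)
    have "map x [0..<Suc n] \<in> P" unfolding P_def
      by (rule CollectI, rule exI[of _ x], rule exI[of _ n]) (use xD n in blast)
    moreover have "length (map x [0..<Suc n]) - 1 = n" by (simp del: upt_Suc)
    ultimately show ?thesis by (intro bexI[of _ "map x [0..<Suc n]"]) (simp del: upt_Suc)+
  qed
  show ?thesis
  proof (cases "P = {}")
    case True
    have "x \<notin> D" for x using Pcov[of x] True by blast
    then have "D = {}" by blast
    then show ?thesis by (intro exI[of _ "{}"] exI[of _ id] exI[of _ "\<lambda>_. []"] conjI) simp_all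
  next
    case False
    define b where "b = from_nat_into P"
    define l where "l i = length (b i) - 1" for i
    have bP: "b i \<in> P" for i unfolding b_def using from_nat_into[OF False] by blast
    have "D = {x\<in>\<Lambda>. \<exists>i\<in>UNIV. map x [0..<Suc (l i)] = b i}"
    proof
      show "D \<subseteq> {x\<in>\<Lambda>. \<exists>i\<in>UNIV. map x [0..<Suc (l i)] = b i}"
      proof
        fix x assume x: "x \<in> D"
        then obtain w where w: "w \<in> P" "map x [0..<Suc (length w - 1)] = w" using Pcov by blast
        obtain i where "b i = w" using from_nat_into_surj[OF cP w(1)] b_def by blast
        then have "l i = length w - 1" using l_def by simp
        then have "map x [0..<Suc (l i)] = b i" using w(2) \<open>b i = w\<close> by simp
        moreover have "x \<in> \<Lambda>" using x D(1) by blast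
        ultimately show "x \<in> {x\<in>\<Lambda>. \<exists>i\<in>UNIV. map x [0..<Suc (l i)] = b i}" by blast
      qed
      show "{x\<in>\<Lambda>. \<exists>i\<in>UNIV. map x [0..<Suc (l i)] = b i} \<subseteq> D"
      proof
        fix x assume "x \<in> {x\<in>\<Lambda>. \<exists>i\<in>UNIV. map x [0..<Suc (l i)] = b i}"
        then obtain i where i: "x \<in> \<Lambda>" "map x [0..<Suc (l i)] = b i" by blast
        have "map x [0..<Suc (length (b i) - 1)] = b i" using i(2) l_def by simp
        then show "x \<in> D" using Pgood[OF bP[of i]] i(1) by blast
      qed
    qed
    moreover have "\<forall>i\<in>UNIV. b i \<in> allblocks (OTW A)" using Pgood[OF bP] by blast
    ultimately show ?thesis by (intro exI[of _ UNIV] exI[of _ l] exI[of _ b] conjI)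
  qed
qed

definition rep :: "'a set \<Rightarrow> 'a seq set \<Rightarrow> 'a seq set \<Rightarrow> nat set \<Rightarrow> (nat \<Rightarrow> nat) \<Rightarrow> (nat \<Rightarrow> 'a option list) \<Rightarrow> bool" where
  "rep A \<Lambda> D I l b \<longleftrightarrow> (\<forall>i\<in>I. b i \<in> allblocks (OTW A)) \<and> D = {x\<in>\<Lambda>. \<exists>i\<in>I. map x [0..<Suc (l i)] = b i}"

lemma fd_intro:
  assumes "countable A" "C \<subseteq> \<Lambda>" "\<Lambda> \<subseteq> OTW A" "pd \<Lambda> C" "pd \<Lambda> (\<Lambda> - C)"
  shows "finitely_defined A \<Lambda> C"
proof -
  have "\<exists>I l b. rep A \<Lambda> C I l b" unfolding rep_def by (rule prefix_rep[OF assms(1,2,3,4)])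
  then obtain I l b where 1: "rep A \<Lambda> C I l b" by blast
  have "\<exists>I l b. rep A \<Lambda> (\<Lambda> - C) I l b" unfolding rep_def by (rule prefix_rep[OF assms(1) Diff_subset assms(3,5)])
  then obtain J n d where 2: "rep A \<Lambda> (\<Lambda> - C) J n d" by blast
  show ?thesis unfolding finitely_defined_def
    apply (rule conjI[OF assms(2)])
    apply (rule exI[of _ I], rule exI[of _ J], rule exI[of _ l], rule exI[of _ n], rule exI[of _ b], rule exI[of _ d])
    using 1 2 unfolding rep_def by (elim conjE) (intro conjI; assumption)
qed

lemma open_pd:
  assumes "\<Lambda> \<subseteq> OTW A" "openin (subtopology (OTW_top A) \<Lambda>) P"
  shows "pd \<Lambda> P"
  unfolding pd_def
proof
  fix x assume x: "x \<in> P"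
  have H: "P \<subseteq> \<Lambda> \<and> (\<forall>x\<in>P. loc A x (\<lambda>y. y \<in> \<Lambda> \<longrightarrow> y \<in> P))"
    using openX[OF assms(1), THEN iffD1, OF assms(2)] .
  have "\<forall>x\<in>P. loc A x (\<lambda>y. y \<in> \<Lambda> \<longrightarrow> y \<in> P)" using H by (rule conjunct2)
  then have "loc A x (\<lambda>y. y \<in> \<Lambda> \<longrightarrow> y \<in> P)" using x by (rule bspec)
  then have "\<exists>w G. set w \<subseteq> A \<and> finite G \<and> G \<subseteq> A \<and> x \<in> cyl A w G \<and> (\<forall>y\<in>cyl A w G. y \<in> \<Lambda> \<longrightarrow> y \<in> P)"
    unfolding loc_def .
  then obtain v F where vF: "x \<in> cyl A v F" "\<forall>y\<in>cyl A v F. y \<in> \<Lambda> \<longrightarrow> y \<in> P"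
    by blast
  have xO: "x \<in> OTW A" using vF(1) cyl_OTW by blast
  show "\<exists>n. \<forall>y\<in>\<Lambda>. map y [0..<Suc n] = map x [0..<Suc n] \<longrightarrow> y \<in> P"
  proof (intro exI[of _ "length v"] ballI impI)
    fix y assume y: "y \<in> \<Lambda>" "map y [0..<Suc (length v)] = map x [0..<Suc (length v)]"
    have ag: "\<forall>i\<le>length v. y i = x i"
    proof (intro allI impI)
      fix i assume "i \<le> length v"
      have "map y [0..<Suc (length v)] ! i = map x [0..<Suc (length v)] ! i" using y(2) by (rule arg_cong)
      then show "y i = x i" using \<open>i \<le> length v\<close> by (simp del: upt_Suc)
    qed
    have yO: "y \<in> OTW A" using y(1) assms(1) by blast
    have "(y \<in> cyl A v F) = (x \<in> cyl A v F)" by (rule cyl_agree_iff[OF xO yO ag])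
    then have "y \<in> cyl A v F" using vF(1) by simp
    then show "y \<in> P" using vF(2) y(1) by blast
  qed
qed


lemma shift_cyl:
  assumes "z \<in> OTW A"
  shows "((shift^^k) z \<in> cyl A v F) \<longleftrightarrow> (\<forall>i<length v. z (i+k) = Some (v!i)) \<and> z (length v + k) \<notin> Some ` F"
proof -
  have "(shift^^k) z \<in> OTW A" using shiftpow_OTW[OF assms] .
  then show ?thesis unfolding cyl_def shift_pow by simp
qed

lemma loc_intro:
  assumes "set w \<subseteq> A" "finite G" "G \<subseteq> A" "x \<in> cyl A w G" "\<And>y. y \<in> cyl A w G \<Longrightarrow> P y"
  shows "loc A x P"
  unfolding loc_def
  by (rule exI[of _ w], rule exI[of _ G]) (intro conjI ballI assms)

lemma cyl_prefix: "y \<in> cyl A u E \<Longrightarrow> x \<in> cyl A u E \<Longrightarrow> j < length u \<Longrightarrow> y j = x j"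
  unfolding cyl_def by simp

lemma prefix_word:
  assumes "x \<in> OTW A" "\<forall>j<n. x j \<noteq> None"
  shows "set (map (\<lambda>i. the (x i)) [0..<n]) \<subseteq> A"
    and "\<forall>i<n. x i = Some (map (\<lambda>i. the (x i)) [0..<n] ! i)"
proof -
  show "set (map (\<lambda>i. the (x i)) [0..<n]) \<subseteq> A"
  proof
    fix a assume "a \<in> set (map (\<lambda>i. the (x i)) [0..<n])"
    then obtain i where i: "i < n" "a = the (x i)" by auto
    have "x i = None \<or> (\<exists>b\<in>A. x i = Some b)" using OTW_vals[OF assms(1)] .
    then obtain b where "b \<in> A" "x i = Some b" using assms(2) i(1) by blast
    then show "a \<in> A" using i(2) by simp
  qed
  show "\<forall>i<n. x i = Some (map (\<lambda>i. the (x i)) [0..<n] ! i)"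
    using assms(2) by simp
qed

lemma shift_loc:
  assumes x: "x \<in> OTW A" "\<forall>j<k. x j \<noteq> None" and v: "set v \<subseteq> A" "finite F" "F \<subseteq> A"
  shows "loc A x (\<lambda>y. (shift^^k) y \<in> cyl A v F \<longleftrightarrow> (shift^^k) x \<in> cyl A v F)"
proof -
  define M where "M z \<longleftrightarrow> (\<forall>i<length v. z (i+k) = Some (v!i)) \<and> z (length v + k) \<notin> Some ` F" for z
  have red: "loc A x (\<lambda>y. M y \<longleftrightarrow> M x) \<Longrightarrow> ?thesis"
  proof -
    assume "loc A x (\<lambda>y. M y \<longleftrightarrow> M x)"
    then show ?thesis
    proof (rule loc_mono)
      fix y assume "y \<in> OTW A" "M y \<longleftrightarrow> M x"
      then show "(shift^^k) y \<in> cyl A v F \<longleftrightarrow> (shift^^k) x \<in> cyl A v F"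
        using shift_cyl[of y A k v F] shift_cyl[OF x(1), of k v F] unfolding M_def by simp
    qed
  qed
  show ?thesis
  proof (cases "\<forall>j\<le>k + length v. x j \<noteq> None")
    case True
    define u where "u = map (\<lambda>i. the (x i)) [0..<Suc (k + length v)]"
    have nn: "\<forall>j<Suc (k + length v). x j \<noteq> None" using True by simp
    have u: "set u \<subseteq> A" "\<forall>i<Suc (k + length v). x i = Some (u ! i)"
      using prefix_word[OF x(1) nn] unfolding u_def by blast+
    have lu: "length u = Suc (k + length v)" unfolding u_def by simp
    have xu: "x \<in> cyl A u {}" unfolding cyl_def using x(1) u(2) lu by simp
    have "loc A x (\<lambda>y. M y \<longleftrightarrow> M x)"
    proof (rule loc_intro[OF u(1) _ _ xu])
      fix y assume y: "y \<in> cyl A u {}"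
      have "\<forall>j<Suc (k + length v). y j = x j" using cyl_prefix[OF y xu] lu by simp
      then show "M y \<longleftrightarrow> M x" unfolding M_def by (auto simp: add.commute)
    qed auto
    then show ?thesis by (rule red)
  next
    case False
    then have ex: "\<exists>j. x j = None \<and> j \<le> k + length v" by auto
    define m where "m = (LEAST j. x j = None \<and> j \<le> k + length v)"
    have m1: "x m = None" "m \<le> k + length v" using LeastI_ex[OF ex] unfolding m_def by blast+
    have m2: "\<forall>j<m. x j \<noteq> None"
    proof (intro allI impI)
      fix j assume "j < m"
      then have "\<not> (x j = None \<and> j \<le> k + length v)" unfolding m_def by (rule not_less_Least)
      then show "x j \<noteq> None" using \<open>j < m\<close> m1(2) by simp
    qed
    have km: "k \<le> m" using x(2) m1(1) by (metis not_le)
    define u where "u = map (\<lambda>i. the (x i)) [0..<m]"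
    have u: "set u \<subseteq> A" "\<forall>i<m. x i = Some (u ! i)"
      using prefix_word[OF x(1) m2] unfolding u_def by blast+
    have lu: "length u = m" unfolding u_def by simp
    show ?thesis
    proof (cases "m < k + length v")
      case True
      define c where "c = v ! (m - k)"
      have mk: "m - k < length v" using True km by simp
      have cA: "c \<in> A" using v(1) mk unfolding c_def by (meson nth_mem subsetD)
      have xu: "x \<in> cyl A u {c}" unfolding cyl_def using x(1) u(2) lu m1(1) by simp
      have Mx: "\<not> M x"
      proof
        assume "M x"
        then have "x (m - k + k) = Some (v ! (m - k))" using mk unfolding M_def by blast
        then show False using m1(1) km by simp
      qed
      have "loc A x (\<lambda>y. M y \<longleftrightarrow> M x)"
      proof (rule loc_intro[OF u(1) _ _ xu])
        fix y assume y: "y \<in> cyl A u {c}"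
        then have "y m \<noteq> Some c" using lu unfolding cyl_def by simp
        then have "\<not> M y" using mk km unfolding M_def c_def by (metis le_add_diff_inverse2)
        then show "M y \<longleftrightarrow> M x" using Mx by simp
      qed (use cA in auto)
      then show ?thesis by (rule red)
    next
      case False
      then have mv: "m = k + length v" using m1(2) by simp
      have xu: "x \<in> cyl A u F" unfolding cyl_def using x(1) u(2) lu m1(1) by simp
      have "loc A x (\<lambda>y. M y \<longleftrightarrow> M x)"
      proof (rule loc_intro[OF u(1) v(2,3) xu])
        fix y assume y: "y \<in> cyl A u F"
        then have ym: "y (length v + k) \<notin> Some ` F" using lu mv unfolding cyl_def by (simp add: add.commute)
        have xm: "x (length v + k) \<notin> Some ` F" using m1(1) mv by (simp add: add.commute)
        have "\<forall>i<length v. y (i + k) = x (i + k)" using cyl_prefix[OF y xu] lu mv by simp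
        then show "M y \<longleftrightarrow> M x" using ym xm unfolding M_def by simp
      qed
      then show ?thesis by (rule red)
    qed
  qed
qed


lemma topX: "\<Lambda> \<subseteq> OTW A \<Longrightarrow> topspace (subtopology (OTW_top A) \<Lambda>) = \<Lambda>"
  by (auto simp: topspace_OTW)

lemma shiftpow_in: "shift ` \<Lambda> \<subseteq> \<Lambda> \<Longrightarrow> x \<in> \<Lambda> \<Longrightarrow> (shift^^n) x \<in> \<Lambda>"
  by (induction n) auto

lemma none_emp: assumes "x \<in> OTW A" "x j = None" shows "(shift^^j) x = emp"
proof
  fix i show "(shift^^j) x i = emp i"
    using OTW_none_mono[OF assms, of "i + j"] unfolding shift_pow emp_def by simp
qed

lemma shift_loc_g:
  assumes "x \<in> OTW A" "\<forall>j<k. x j \<noteq> None" "G \<in> gcyls A"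
  shows "loc A x (\<lambda>y. (shift^^k) y \<in> G \<longleftrightarrow> (shift^^k) x \<in> G)"
proof -
  have "G \<in> {cyl A w F | w F. set w \<subseteq> A \<and> finite F \<and> F \<subseteq> A}" using assms(3) gcyls_eq by blast
  then obtain w F where G: "G = cyl A w F" "set w \<subseteq> A" "finite F" "F \<subseteq> A" by blast
  show ?thesis unfolding G(1) by (rule shift_loc[OF assms(1,2) G(2,3,4)])
qed

lemma back_dir:
  fixes \<Phi> :: "'a seq \<Rightarrow> 'b seq"
  assumes L: "\<Lambda> \<subseteq> OTW A" "shift ` \<Lambda> \<subseteq> \<Lambda>"
    and G: "\<Gamma> \<subseteq> OTW B" and PG: "\<forall>x\<in>\<Lambda>. \<Phi> x \<in> \<Gamma>" and Pe: "\<Phi> emp = emp"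
    and CN: "C None = {x\<in>\<Lambda>. \<Phi> x = emp}"
    and sbc: "sliding_block_code A \<Lambda> K C \<Phi>"
    and fin: "\<forall>a\<in>K. \<exists>S. finite S \<and> S \<subseteq> gcyls A \<and> C (Some a) = \<Union>S \<inter> \<Lambda>"
  shows "continuous_map (subtopology (OTW_top A) \<Lambda>) (subtopology (OTW_top B) \<Gamma>) \<Phi>
           \<and> (\<forall>x\<in>\<Lambda>. \<Phi> (shift x) = shift (\<Phi> x))"
proof -
  define idx where "idx = insert None (Some ` K)"
  have sbc': "(\<forall>a\<in>idx. finitely_defined A \<Lambda> (C a)) \<and>
     (\<forall>a\<in>idx. \<forall>b\<in>idx. a \<noteq> b \<longrightarrow> C a \<inter> C b = {}) \<and>
     (\<Union>a\<in>idx. C a) = \<Lambda> \<and>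
     shift ` C None \<subseteq> C None \<and>
     (\<forall>x\<in>\<Lambda>. \<forall>n. \<Phi> x n = (THE a. a \<in> idx \<and> (shift ^^ n) x \<in> C a))"
    using sbc unfolding sliding_block_code_def idx_def .
  have Cdisj: "\<forall>a\<in>idx. \<forall>b\<in>idx. a \<noteq> b \<longrightarrow> C a \<inter> C b = {}"
    using sbc' by (elim conjE) assumption
  have Cun: "(\<Union>a\<in>idx. C a) = \<Lambda>" using sbc' by (elim conjE) assumption
  have Pf: "\<forall>x\<in>\<Lambda>. \<forall>n. \<Phi> x n = (THE a. a \<in> idx \<and> (shift ^^ n) x \<in> C a)"
    using sbc' by (elim conjE) assumption
  have phi_char: "\<Phi> x n = a" if "x \<in> \<Lambda>" "a \<in> idx" "(shift^^n) x \<in> C a" for x n a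
  proof -
    have "(THE a. a \<in> idx \<and> (shift ^^ n) x \<in> C a) = a"
    proof (rule the_equality)
      show "a \<in> idx \<and> (shift ^^ n) x \<in> C a" using that by blast
      fix b assume "b \<in> idx \<and> (shift ^^ n) x \<in> C b"
      then show "b = a" using Cdisj that by blast
    qed
    then show ?thesis using Pf that(1) by simp
  qed
  have phi_ex: "\<exists>a\<in>idx. (shift^^n) x \<in> C a \<and> \<Phi> x n = a" if "x \<in> \<Lambda>" for x n
  proof -
    have "(shift^^n) x \<in> \<Lambda>" using shiftpow_in[OF L(2) that] .
    then obtain a where "a \<in> idx" "(shift^^n) x \<in> C a" using Cun by blast
    then show ?thesis using phi_char that by blast
  qed
  have phi_idx: "\<Phi> x n \<in> idx" if "x \<in> \<Lambda>" for x n using phi_ex[OF that, of n] by blast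
  have embC: "emp \<in> C None" if "emp \<in> \<Lambda>" using that Pe CN by blast
  have nonNone: "x i \<noteq> None" if "x \<in> \<Lambda>" "\<Phi> x i = Some c" for x i c
  proof
    assume "x i = None"
    then have "(shift^^i) x = emp" using none_emp that(1) L(1) by blast
    moreover have "(shift^^i) x \<in> \<Lambda>" using shiftpow_in[OF L(2) that(1)] .
    ultimately have "(shift^^i) x \<in> C None" using embC by simp
    then have "\<Phi> x i = None" using phi_char[OF that(1)] idx_def by blast
    then show False using that(2) by simp
  qed
  have phiSome: "c \<in> K \<and> (shift^^i) x \<in> C (Some c)" if "x \<in> \<Lambda>" "\<Phi> x i = Some c" for x i c
    using phi_ex[OF that(1), of i] that(2) idx_def by auto
  have comm: "\<Phi> (shift x) = shift (\<Phi> x)" if x: "x \<in> \<Lambda>" for x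
  proof
    fix n
    have sx: "shift x \<in> \<Lambda>" using L(2) x by blast
    have "(shift^^n) (shift x) = (shift^^(Suc n)) x" by (simp add: funpow_Suc_right del: funpow.simps)
    then show "\<Phi> (shift x) n = shift (\<Phi> x) n" using Pf x sx by (simp add: shift_def)
  qed
  have pre_loc: "loc A x (\<lambda>y. y \<in> \<Lambda> \<longrightarrow> \<Phi> y \<in> cyl B v F)"
    if x: "x \<in> \<Lambda>" "\<Phi> x \<in> cyl B v F" and vF: "set v \<subseteq> B" "finite F" "F \<subseteq> B" for x v F
  proof -
    define n where "n = length v"
    have xO: "x \<in> OTW A" using x(1) L(1) by blast
    have pv: "\<forall>i<n. \<Phi> x i = Some (v!i)" using x(2) unfolding cyl_def n_def by blast
    have pn: "\<Phi> x n \<notin> Some ` F" using x(2) unfolding cyl_def n_def by blast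
    have nn: "\<forall>j<n. x j \<noteq> None" using pv nonNone[OF x(1)] by blast
    have l1: "loc A x (\<lambda>y. y \<in> \<Lambda> \<longrightarrow> \<Phi> y i = \<Phi> x i)" if i: "i \<in> {..<n}" for i
    proof -
      have iK: "v!i \<in> K" and sC: "(shift^^i) x \<in> C (Some (v!i))" using phiSome[OF x(1)] pv i by auto
      define S where "S = (SOME S. finite S \<and> S \<subseteq> gcyls A \<and> C (Some (v!i)) = \<Union>S \<inter> \<Lambda>)"
      have "finite S \<and> S \<subseteq> gcyls A \<and> C (Some (v!i)) = \<Union>S \<inter> \<Lambda>"
        unfolding S_def by (rule someI_ex) (rule bspec[OF fin iK])
      then have S: "finite S" "S \<subseteq> gcyls A" "C (Some (v!i)) = \<Union>S \<inter> \<Lambda>"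
        by (rule conjunct1, rule conjunct1[OF conjunct2], rule conjunct2[OF conjunct2])
      have "(shift^^i) x \<in> \<Union>S" using sC unfolding S(3) by (rule IntD1)
      then obtain G where GS: "G \<in> S" "(shift^^i) x \<in> G" by (rule UnionE)
      have nni: "\<forall>j<i. x j \<noteq> None" using nn i by simp
      have "loc A x (\<lambda>y. (shift^^i) y \<in> G \<longleftrightarrow> (shift^^i) x \<in> G)"
        using shift_loc_g[OF xO nni] GS(1) S(2) by blast
      then show ?thesis
      proof (rule loc_mono)
        fix y assume y: "y \<in> OTW A" "((shift^^i) y \<in> G) = ((shift^^i) x \<in> G)"
        show "y \<in> \<Lambda> \<longrightarrow> \<Phi> y i = \<Phi> x i"
        proof
          assume yL: "y \<in> \<Lambda>"
          have "(shift^^i) y \<in> C (Some (v!i))" using y(2) GS S(3) shiftpow_in[OF L(2) yL] by blast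
          then have "\<Phi> y i = Some (v!i)" using phi_char[OF yL] iK idx_def by blast
          then show "\<Phi> y i = \<Phi> x i" using pv i by simp
        qed
      qed
    qed
    have l2: "loc A x (\<lambda>y. y \<in> \<Lambda> \<longrightarrow> \<Phi> y n \<noteq> Some c)" if c: "c \<in> F" for c
    proof (cases "c \<in> K")
      case False
      have "loc A x (\<lambda>y. True)" using loc_true[OF xO] .
      then show ?thesis
      proof (rule loc_mono)
        fix y assume "y \<in> OTW A"
        show "y \<in> \<Lambda> \<longrightarrow> \<Phi> y n \<noteq> Some c" using phi_idx[of y n] False unfolding idx_def by auto
      qed
    next
      case True
      define S where "S = (SOME S. finite S \<and> S \<subseteq> gcyls A \<and> C (Some c) = \<Union>S \<inter> \<Lambda>)"
      have "finite S \<and> S \<subseteq> gcyls A \<and> C (Some c) = \<Union>S \<inter> \<Lambda>"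
        unfolding S_def by (rule someI_ex) (rule bspec[OF fin True])
      then have S: "finite S" "S \<subseteq> gcyls A" "C (Some c) = \<Union>S \<inter> \<Lambda>"
        by (rule conjunct1, rule conjunct1[OF conjunct2], rule conjunct2[OF conjunct2])
      have "\<Phi> x n \<noteq> Some c" using pn c by blast
      then have nC: "(shift^^n) x \<notin> C (Some c)" using phi_char[OF x(1)] True idx_def by blast
      have "\<forall>G\<in>S. loc A x (\<lambda>y. (shift^^n) y \<in> G \<longleftrightarrow> (shift^^n) x \<in> G)"
        using shift_loc_g[OF xO nn] S(2) by blast
      then have "loc A x (\<lambda>y. \<forall>G\<in>S. (shift^^n) y \<in> G \<longleftrightarrow> (shift^^n) x \<in> G)"
        by (rule loc_ball[OF S(1) xO])
      then show ?thesis
      proof (rule loc_mono)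
        fix y assume y: "y \<in> OTW A" "\<forall>G\<in>S. ((shift^^n) y \<in> G) = ((shift^^n) x \<in> G)"
        show "y \<in> \<Lambda> \<longrightarrow> \<Phi> y n \<noteq> Some c"
        proof (intro impI notI)
          assume yL: "y \<in> \<Lambda>" and "\<Phi> y n = Some c"
          then have "(shift^^n) y \<in> C (Some c)" using phiSome by blast
          then obtain G where "G \<in> S" "(shift^^n) y \<in> G" using S(3) by blast
          then have "(shift^^n) x \<in> G" using y(2) by blast
          then show False using nC S(3) \<open>G \<in> S\<close> shiftpow_in[OF L(2) x(1)] by blast
        qed
      qed
    qed
    have "loc A x (\<lambda>y. \<forall>i\<in>{..<n}. y \<in> \<Lambda> \<longrightarrow> \<Phi> y i = \<Phi> x i)"
      by (rule loc_ball[OF _ xO]) (use l1 in auto)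
    moreover have "loc A x (\<lambda>y. \<forall>c\<in>F. y \<in> \<Lambda> \<longrightarrow> \<Phi> y n \<noteq> Some c)"
      by (rule loc_ball[OF vF(2) xO]) (use l2 in auto)
    ultimately have "loc A x (\<lambda>y. (\<forall>i\<in>{..<n}. y \<in> \<Lambda> \<longrightarrow> \<Phi> y i = \<Phi> x i) \<and> (\<forall>c\<in>F. y \<in> \<Lambda> \<longrightarrow> \<Phi> y n \<noteq> Some c))"
      by (rule loc_conj)
    then show ?thesis
    proof (rule loc_mono)
      fix y assume y: "y \<in> OTW A" "(\<forall>i\<in>{..<n}. y \<in> \<Lambda> \<longrightarrow> \<Phi> y i = \<Phi> x i) \<and> (\<forall>c\<in>F. y \<in> \<Lambda> \<longrightarrow> \<Phi> y n \<noteq> Some c)"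
      show "y \<in> \<Lambda> \<longrightarrow> \<Phi> y \<in> cyl B v F"
      proof
        assume yL: "y \<in> \<Lambda>"
        have "\<Phi> y \<in> OTW B" using PG G yL by blast
        moreover have "\<forall>i<length v. \<Phi> y i = Some (v!i)" using y(2) yL pv unfolding n_def by auto
        moreover have "\<Phi> y (length v) \<notin> Some ` F" using y(2) yL unfolding n_def by blast
        ultimately show "\<Phi> y \<in> cyl B v F" unfolding cyl_def by blast
      qed
    qed
  qed
  have cont: "continuous_map (subtopology (OTW_top A) \<Lambda>) (topology_generated_by (gcyls B)) \<Phi>"
    unfolding continuous_on_generated_topo_iff topX[OF L(1)]
  proof (intro conjI allI impI)
    fix U assume "U \<in> gcyls B"
    then have "U \<in> {cyl B w F | w F. set w \<subseteq> B \<and> finite F \<and> F \<subseteq> B}" using gcyls_eq by blast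
    then obtain v F where U: "U = cyl B v F" "set v \<subseteq> B" "finite F" "F \<subseteq> B" by blast
    show "openin (subtopology (OTW_top A) \<Lambda>) (\<Phi> -` U \<inter> \<Lambda>)"
      unfolding openX[OF L(1)]
    proof (intro conjI ballI)
      show "\<Phi> -` U \<inter> \<Lambda> \<subseteq> \<Lambda>" by blast
      fix x assume x: "x \<in> \<Phi> -` U \<inter> \<Lambda>"
      have "loc A x (\<lambda>y. y \<in> \<Lambda> \<longrightarrow> \<Phi> y \<in> cyl B v F)"
        using pre_loc[of x v F] x U by blast
      then show "loc A x (\<lambda>y. y \<in> \<Lambda> \<longrightarrow> y \<in> \<Phi> -` U \<inter> \<Lambda>)"
        by (rule loc_mono) (use U(1) in blast)
    qed
  next
    show "\<Phi> ` \<Lambda> \<subseteq> \<Union>(gcyls B)" using PG G Union_gcyls by blast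
  qed
  have "continuous_map (subtopology (OTW_top A) \<Lambda>) (subtopology (OTW_top B) \<Gamma>) \<Phi>"
    unfolding OTW_top_def[of B] subtopology_subtopology continuous_map_in_subtopology topX[OF L(1)]
    using cont PG G by blast
  then show ?thesis using comm by blast
qed


lemma fwd_dir:
  fixes \<Phi> :: "'a seq \<Rightarrow> 'b seq"
  assumes A: "countable A" and L: "\<Lambda> \<subseteq> OTW A" "closedin (OTW_top A) \<Lambda>" "shift ` \<Lambda> \<subseteq> \<Lambda>"
    and G: "\<Gamma> \<subseteq> OTW B" and PG: "\<forall>x\<in>\<Lambda>. \<Phi> x \<in> \<Gamma>" and Pe: "\<Phi> emp = emp"
    and fdN: "finitely_defined A \<Lambda> {x\<in>\<Lambda>. \<Phi> x = emp}"
    and cont: "continuous_map (subtopology (OTW_top A) \<Lambda>) (subtopology (OTW_top B) \<Gamma>) \<Phi>"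
    and comm: "\<forall>x\<in>\<Lambda>. \<Phi> (shift x) = shift (\<Phi> x)"
  shows "\<exists>C. C None = {x\<in>\<Lambda>. \<Phi> x = emp} \<and> sliding_block_code A \<Lambda> (letters \<Gamma>) C \<Phi> \<and>
              (\<forall>a\<in>letters \<Gamma>. \<exists>S. finite S \<and> S \<subseteq> gcyls A \<and> C (Some a) = \<Union>S \<inter> \<Lambda>)"
proof -
  define K where "K = letters \<Gamma>"
  define idx where "idx = insert None (Some ` K)"
  define C where "C a = (if a = None then {x\<in>\<Lambda>. \<Phi> x = emp} else {x\<in>\<Lambda>. \<Phi> x 0 = a})" for a
  have CNone: "C None = {x\<in>\<Lambda>. \<Phi> x = emp}" unfolding C_def by simp
  have CSome: "C (Some a) = {x\<in>\<Lambda>. \<Phi> x 0 = Some a}" for a unfolding C_def by simp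
  have Csub: "C a \<subseteq> \<Lambda>" for a unfolding C_def by auto
  have phipow: "\<Phi> ((shift^^n) x) = (shift^^n) (\<Phi> x)" if x: "x \<in> \<Lambda>" for x n
  proof (induction n)
    case 0 then show ?case by simp
  next
    case (Suc n)
    have "(shift^^n) x \<in> \<Lambda>" using shiftpow_in[OF L(3) x] .
    then have "\<Phi> (shift ((shift^^n) x)) = shift (\<Phi> ((shift^^n) x))" using comm by blast
    then show ?case using Suc by simp
  qed
  have phin: "\<Phi> x n = \<Phi> ((shift^^n) x) 0" if "x \<in> \<Lambda>" for x n
    using phipow[OF that, of n] by (simp add: shift_pow)
  have letK: "c \<in> K" if "z \<in> \<Gamma>" "z n = Some c" for z n c
  proof -
    have "[Some c] = map z [n..<n+1]" using that(2) by simp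
    then have "[Some c] \<in> blocks \<Gamma> 1" unfolding blocks_def using that(1) by force
    then show ?thesis unfolding K_def letters_def by simp
  qed
  have KB: "c \<in> B" if "c \<in> K" for c
  proof -
    have "[Some c] \<in> blocks \<Gamma> 1" using that unfolding K_def letters_def by simp
    then have "\<exists>z\<in>\<Gamma>. \<exists>k. [Some c] = map z [k..<k+1]" unfolding blocks_def mem_Collect_eq by (rule conjunct2)
    then show ?thesis
    proof (rule bexE)
      fix z assume z: "z \<in> \<Gamma>" "\<exists>k. [Some c] = map z [k..<k+1]"
      from z(2) obtain k where "[Some c] = map z [k..<k+1]" by (rule exE)
      then have zc: "z k = Some c" by simp
      have "z \<in> OTW B" using z(1) G by blast
      then have "z k = None \<or> (\<exists>b\<in>B. z k = Some b)" by (rule OTW_vals)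
      then show ?thesis using zc by auto
    qed
  qed
  have emp_of: "\<Phi> x = emp" if "x \<in> \<Lambda>" "\<Phi> x 0 = None" for x
  proof
    fix j
    have "\<Phi> x \<in> OTW B" using that(1) PG G by blast
    then have "\<Phi> x j = None" using OTW_none_mono that(2) by blast
    then show "\<Phi> x j = emp j" unfolding emp_def by simp
  qed
  have phi0: "\<Phi> x 0 \<in> idx \<and> x \<in> C (\<Phi> x 0)" if x: "x \<in> \<Lambda>" for x
  proof (cases "\<Phi> x 0")
    case None
    then show ?thesis using emp_of[OF x] x unfolding idx_def C_def by simp
  next
    case (Some c)
    then have "c \<in> K" using letK PG x by blast
    then show ?thesis using Some x unfolding idx_def C_def by simp
  qed
  have Cdisj: "C a \<inter> C b = {}" if ab: "a \<noteq> b" for a b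
  proof (cases a)
    case None
    then obtain c where b: "b = Some c" using ab by (cases b) auto
    show ?thesis unfolding None b C_def by (auto simp: emp_def)
  next
    case (Some c)
    show ?thesis
    proof (cases b)
      case None then show ?thesis unfolding Some C_def by (auto simp: emp_def)
    next
      case (Some d) then show ?thesis using ab \<open>a = Some c\<close> unfolding C_def by auto
    qed
  qed
  have cont': "continuous_map (subtopology (OTW_top A) \<Lambda>) (topology_generated_by (gcyls B)) \<Phi>"
    using cont unfolding OTW_top_def[of B] subtopology_subtopology continuous_map_in_subtopology by blast
  have open_pre: "openin (subtopology (OTW_top A) \<Lambda>) (\<Phi> -` U \<inter> \<Lambda>)" if "U \<in> gcyls B" for U
    using cont' that unfolding continuous_on_generated_topo_iff topX[OF L(1)] by blast
  have cylg: "cyl B w F \<in> gcyls B" if "set w \<subseteq> B" "finite F" "F \<subseteq> B" for w F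
    unfolding gcyls_eq using that by blast
  have opC: "openin (subtopology (OTW_top A) \<Lambda>) (C (Some a))"
    and opN: "openin (subtopology (OTW_top A) \<Lambda>) (\<Lambda> - C (Some a))" if a: "a \<in> K" for a
  proof -
    have aB: "a \<in> B" using KB a .
    have "C (Some a) = \<Phi> -` cyl B [a] {} \<inter> \<Lambda>"
    proof (rule set_eqI)
      fix x show "x \<in> C (Some a) \<longleftrightarrow> x \<in> \<Phi> -` cyl B [a] {} \<inter> \<Lambda>"
      proof (cases "x \<in> \<Lambda>")
        case True
        then have "\<Phi> x \<in> OTW B" using PG G by blast
        then show ?thesis using True unfolding CSome cyl_def by simp
      qed (use Csub in blast)
    qed
    then show "openin (subtopology (OTW_top A) \<Lambda>) (C (Some a))"
      using open_pre[OF cylg[of "[a]" "{}"]] aB by simp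
    have "\<Lambda> - C (Some a) = \<Phi> -` cyl B [] {a} \<inter> \<Lambda>"
    proof (rule set_eqI)
      fix x show "x \<in> \<Lambda> - C (Some a) \<longleftrightarrow> x \<in> \<Phi> -` cyl B [] {a} \<inter> \<Lambda>"
      proof (cases "x \<in> \<Lambda>")
        case True
        then have "\<Phi> x \<in> OTW B" using PG G by blast
        then show ?thesis using True unfolding CSome cyl_def by simp
      qed blast
    qed
    then show "openin (subtopology (OTW_top A) \<Lambda>) (\<Lambda> - C (Some a))"
      using open_pre[OF cylg[of "[]" "{a}"]] aB by simp
  qed
  have fdS: "finitely_defined A \<Lambda> (C (Some a))" if a: "a \<in> K" for a
    by (rule fd_intro[OF A Csub L(1) open_pd[OF L(1) opC[OF a]] open_pd[OF L(1) opN[OF a]]])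
  have finS: "\<exists>S. finite S \<and> S \<subseteq> gcyls A \<and> C (Some a) = \<Union>S \<inter> \<Lambda>" if a: "a \<in> K" for a
  proof -
    define P where "P = C (Some a)"
    define U where "U = {G \<in> gcyls A. G \<inter> \<Lambda> \<subseteq> P \<or> G \<inter> \<Lambda> \<subseteq> \<Lambda> - P}"
    have lP: "loc A x (\<lambda>y. y \<in> \<Lambda> \<longrightarrow> y \<in> P)" if "x \<in> P" for x
    proof -
      have "P \<subseteq> \<Lambda> \<and> (\<forall>x\<in>P. loc A x (\<lambda>y. y \<in> \<Lambda> \<longrightarrow> y \<in> P))"
        using openX[OF L(1), THEN iffD1, OF opC[OF a]] unfolding P_def .
      then have "\<forall>x\<in>P. loc A x (\<lambda>y. y \<in> \<Lambda> \<longrightarrow> y \<in> P)" by (rule conjunct2)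
      then show ?thesis using that by (rule bspec)
    qed
    have lN: "loc A x (\<lambda>y. y \<in> \<Lambda> \<longrightarrow> y \<in> \<Lambda> - P)" if "x \<in> \<Lambda> - P" for x
    proof -
      have "\<Lambda> - P \<subseteq> \<Lambda> \<and> (\<forall>x\<in>\<Lambda> - P. loc A x (\<lambda>y. y \<in> \<Lambda> \<longrightarrow> y \<in> \<Lambda> - P))"
        using openX[OF L(1), THEN iffD1, OF opN[OF a]] unfolding P_def .
      then have "\<forall>x\<in>\<Lambda> - P. loc A x (\<lambda>y. y \<in> \<Lambda> \<longrightarrow> y \<in> \<Lambda> - P)" by (rule conjunct2)
      then show ?thesis using that by (rule bspec)
    qed
    have inU: "G \<in> U" if "set w \<subseteq> A" "finite E" "E \<subseteq> A" "\<forall>y\<in>cyl A w E. y \<in> \<Lambda> \<longrightarrow> y \<in> Q"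
      "Q = P \<or> Q = \<Lambda> - P" "G = cyl A w E" for w E Q G
    proof -
      have "G \<in> gcyls A" unfolding gcyls_eq using that(1,2,3,6) by blast
      moreover have "G \<inter> \<Lambda> \<subseteq> P \<or> G \<inter> \<Lambda> \<subseteq> \<Lambda> - P" using that(4,5,6) by blast
      ultimately show ?thesis unfolding U_def by blast
    qed
    have LU: "\<Lambda> \<subseteq> \<Union>U"
    proof
      fix x assume x: "x \<in> \<Lambda>"
      have "loc A x (\<lambda>y. y \<in> \<Lambda> \<longrightarrow> y \<in> P) \<or> loc A x (\<lambda>y. y \<in> \<Lambda> \<longrightarrow> y \<in> \<Lambda> - P)"
        using lP lN x by blast
      then obtain Q where Q: "Q = P \<or> Q = \<Lambda> - P" "loc A x (\<lambda>y. y \<in> \<Lambda> \<longrightarrow> y \<in> Q)" by blast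
      then obtain w E where wE: "set w \<subseteq> A" "finite E" "E \<subseteq> A" "x \<in> cyl A w E"
        "\<forall>y\<in>cyl A w E. y \<in> \<Lambda> \<longrightarrow> y \<in> Q" unfolding loc_def by blast
      have "cyl A w E \<in> U" by (rule inU[OF wE(1,2,3,5) Q(1) refl])
      then show "x \<in> \<Union>U" using wE(4) by blast
    qed
    have UG: "U \<subseteq> gcyls A" unfolding U_def by blast
    have "\<exists>S\<subseteq>U. finite S \<and> \<Lambda> \<subseteq> \<Union>S" by (rule compact_cover[OF L(1,2) UG LU])
    then obtain S0 where S0: "S0 \<subseteq> U" "finite S0" "\<Lambda> \<subseteq> \<Union>S0" by blast
    define S where "S = {G \<in> S0. G \<inter> \<Lambda> \<subseteq> P}"
    have "finite S" using S0(2) unfolding S_def by simp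
    moreover have "S \<subseteq> gcyls A" using S0(1) unfolding S_def U_def by blast
    moreover have "P = \<Union>S \<inter> \<Lambda>"
    proof
      show "\<Union>S \<inter> \<Lambda> \<subseteq> P" unfolding S_def by blast
      show "P \<subseteq> \<Union>S \<inter> \<Lambda>"
      proof
        fix x assume x: "x \<in> P"
        then have xL: "x \<in> \<Lambda>" using Csub unfolding P_def by blast
        then obtain G where G: "G \<in> S0" "x \<in> G" using S0(3) by blast
        then have "G \<inter> \<Lambda> \<subseteq> P \<or> G \<inter> \<Lambda> \<subseteq> \<Lambda> - P" using S0(1) unfolding U_def by blast
        then have "G \<inter> \<Lambda> \<subseteq> P" using x xL G(2) by blast
        then show "x \<in> \<Union>S \<inter> \<Lambda>" using G xL unfolding S_def by blast
      qed
    qed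
    ultimately show ?thesis unfolding P_def by blast
  qed
  have sbc: "sliding_block_code A \<Lambda> K C \<Phi>"
    unfolding sliding_block_code_def
  proof (intro conjI)
    show "\<forall>a\<in>insert None (Some ` K). finitely_defined A \<Lambda> (C a)"
    proof
      fix a assume "a \<in> insert None (Some ` K)"
      then consider "a = None" | c where "c \<in> K" "a = Some c" by blast
      then show "finitely_defined A \<Lambda> (C a)"
      proof cases
        case 1 then show ?thesis using fdN CNone by simp
      next
        case 2 then show ?thesis using fdS by simp
      qed
    qed
    show "\<forall>a\<in>insert None (Some ` K). \<forall>b\<in>insert None (Some ` K). a \<noteq> b \<longrightarrow> C a \<inter> C b = {}"
      using Cdisj by blast
    show "(\<Union>a\<in>insert None (Some ` K). C a) = \<Lambda>"
    proof
      show "(\<Union>a\<in>insert None (Some ` K). C a) \<subseteq> \<Lambda>" using Csub by blast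
      show "\<Lambda> \<subseteq> (\<Union>a\<in>insert None (Some ` K). C a)" using phi0 unfolding idx_def by blast
    qed
    show "shift ` C None \<subseteq> C None"
    proof
      fix z assume "z \<in> shift ` C None"
      then obtain x where x: "x \<in> \<Lambda>" "\<Phi> x = emp" "z = shift x" unfolding CNone by blast
      have "shift x \<in> \<Lambda>" using L(3) x(1) by blast
      moreover have "\<Phi> (shift x) = emp" using comm x(1,2) by (simp add: shift_def emp_def)
      ultimately show "z \<in> C None" unfolding CNone using x(3) by blast
    qed
    show "\<forall>x\<in>\<Lambda>. \<forall>n. \<Phi> x n = (THE a. a \<in> insert None (Some ` K) \<and> (shift ^^ n) x \<in> C a)"
    proof (intro ballI allI)
      fix x n assume x: "x \<in> \<Lambda>"
      define z where "z = (shift^^n) x"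
      have zL: "z \<in> \<Lambda>" unfolding z_def using shiftpow_in[OF L(3) x] .
      have "(THE a. a \<in> insert None (Some ` K) \<and> z \<in> C a) = \<Phi> z 0"
      proof (rule the_equality)
        show "\<Phi> z 0 \<in> insert None (Some ` K) \<and> z \<in> C (\<Phi> z 0)" using phi0[OF zL] unfolding idx_def .
        fix a assume a: "a \<in> insert None (Some ` K) \<and> z \<in> C a"
        show "a = \<Phi> z 0"
        proof (rule ccontr)
          assume "a \<noteq> \<Phi> z 0"
          then have "C a \<inter> C (\<Phi> z 0) = {}" by (rule Cdisj)
          then show False using a phi0[OF zL] by blast
        qed
      qed
      then show "\<Phi> x n = (THE a. a \<in> insert None (Some ` K) \<and> (shift ^^ n) x \<in> C a)"
        using phin[OF x, of n] unfolding z_def by simp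
    qed
  qed
  show ?thesis
    by (rule exI[of _ C]) (use CNone sbc finS in \<open>simp add: K_def\<close>)
qed


theorem mainTheorem1:
  fixes A :: "'a set" and B :: "'b set"
    and \<Lambda> :: "'a seq set" and \<Gamma> :: "'b seq set" and \<Phi> :: "'a seq \<Rightarrow> 'b seq"
  assumes "countable A" and "countable B"
    and "shift_space A \<Lambda>" and "shift_space B \<Gamma>"
    and "\<forall>x\<in>\<Lambda>. \<Phi> x \<in> \<Gamma>"
    and "\<Phi> emp = emp"
    and "finitely_defined A \<Lambda> {x\<in>\<Lambda>. \<Phi> x = emp}"
  shows "(continuous_map (subtopology (OTW_top A) \<Lambda>) (subtopology (OTW_top B) \<Gamma>) \<Phi>
           \<and> (\<forall>x\<in>\<Lambda>. \<Phi> (shift x) = shift (\<Phi> x)))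
         \<longleftrightarrow>
         (\<exists>C. C None = {x\<in>\<Lambda>. \<Phi> x = emp} \<and> sliding_block_code A \<Lambda> (letters \<Gamma>) C \<Phi> \<and>
              (\<forall>a\<in>letters \<Gamma>. \<exists>S. finite S \<and> S \<subseteq> gcyls A \<and> C (Some a) = \<Union>S \<inter> \<Lambda>))"
proof -
  note sA0 = assms(3)[unfolded shift_space_def]
  have sA: "\<Lambda> \<subseteq> OTW A" "closedin (OTW_top A) \<Lambda>" "shift ` \<Lambda> \<subseteq> \<Lambda>"
    using sA0 by (rule conjunct1, rule conjunct1[OF conjunct2], rule conjunct1[OF conjunct2[OF conjunct2]])
  have gB: "\<Gamma> \<subseteq> OTW B" using assms(4)[unfolded shift_space_def] by (rule conjunct1)
  show ?thesis
  proof
    assume H: "continuous_map (subtopology (OTW_top A) \<Lambda>) (subtopology (OTW_top B) \<Gamma>) \<Phi>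
           \<and> (\<forall>x\<in>\<Lambda>. \<Phi> (shift x) = shift (\<Phi> x))"
    show "\<exists>C. C None = {x\<in>\<Lambda>. \<Phi> x = emp} \<and> sliding_block_code A \<Lambda> (letters \<Gamma>) C \<Phi> \<and>
              (\<forall>a\<in>letters \<Gamma>. \<exists>S. finite S \<and> S \<subseteq> gcyls A \<and> C (Some a) = \<Union>S \<inter> \<Lambda>)"
      by (rule fwd_dir[OF assms(1) sA(1,2,3) gB assms(5,6,7) conjunct1[OF H] conjunct2[OF H]])
  next
    assume "\<exists>C. C None = {x\<in>\<Lambda>. \<Phi> x = emp} \<and> sliding_block_code A \<Lambda> (letters \<Gamma>) C \<Phi> \<and>
              (\<forall>a\<in>letters \<Gamma>. \<exists>S. finite S \<and> S \<subseteq> gcyls A \<and> C (Some a) = \<Union>S \<inter> \<Lambda>)"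
    then obtain C where C: "C None = {x\<in>\<Lambda>. \<Phi> x = emp}" "sliding_block_code A \<Lambda> (letters \<Gamma>) C \<Phi>"
      "\<forall>a\<in>letters \<Gamma>. \<exists>S. finite S \<and> S \<subseteq> gcyls A \<and> C (Some a) = \<Union>S \<inter> \<Lambda>"
      by (elim exE conjE) (rule that; assumption)
    show "continuous_map (subtopology (OTW_top A) \<Lambda>) (subtopology (OTW_top B) \<Gamma>) \<Phi>
           \<and> (\<forall>x\<in>\<Lambda>. \<Phi> (shift x) = shift (\<Phi> x))"
      by (rule back_dir[OF sA(1,3) gB assms(5,6) C(1,2,3)])
  qed
qed

end
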